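(* Let $r$ be even with $r\mid n$, and let $\pi=(1,2,\dots,r)(r+1,\dots,2r)\cdots(n-r+1,\dots,n)\in S_n$, with centralizer $Z(\pi)$ in $S_n$. Then $$\sum_{w\in I_n\cap Z(\pi)}(-1)^{\mathrm{inv}_w(\pi)}=\begin{cases}0,& n/r\text{ odd},\\ \dfrac{(n/r)!}{(n/(2r))!\,2^{n/(2r)}}\,r^{n/(2r)},& n/r\text{ even}.\end{cases}$$
   Context: $I_n$ is the set of involutions (including identity) of $S_n$. For $w\in I_n$, $\mathrm{Pair}(w)$ is the set of 2-cycles of $w$ as unordered 2-subsets; $\mathrm{Inv}(\pi)=\{\{i,j\}:(j-i)(\pi(j)-\pi(i))<0\}$; $\mathrm{inv}_w(\pi)=\#(\mathrm{Inv}(\pi)\cap\mathrm{Pair}(w))$. *)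

theory Defs
  imports Complex_Main "HOL-Combinatorics.Permutations"
begin

text \<open>Permutations of [n] = {1..n} are functions nat => nat permuting {1..n}
  (identity outside).\<close>

definition involutions :: "nat \<Rightarrow> (nat \<Rightarrow> nat) set" where
  "involutions n = {w. w permutes {1..n} \<and> w \<circ> w = id}"

definition centralizer :: "nat \<Rightarrow> (nat \<Rightarrow> nat) \<Rightarrow> (nat \<Rightarrow> nat) set" where
  "centralizer n p = {w. w permutes {1..n} \<and> w \<circ> p = p \<circ> w}"

definition Pairs :: "nat \<Rightarrow> (nat \<Rightarrow> nat) \<Rightarrow> nat set set" where
  "Pairs n w = {{i, w i} | i. i \<in> {1..n} \<and> w i \<noteq> i}"

definition Inv :: "nat \<Rightarrow> (nat \<Rightarrow> nat) \<Rightarrow> nat set set" where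
  "Inv n p = {{i, j} | i j. i \<in> {1..n} \<and> j \<in> {1..n} \<and>
       (int j - int i) * (int (p j) - int (p i)) < 0}"

definition inv_w :: "nat \<Rightarrow> (nat \<Rightarrow> nat) \<Rightarrow> (nat \<Rightarrow> nat) \<Rightarrow> nat" where
  "inv_w n w p = card (Inv n p \<inter> Pairs n w)"

text \<open>The product of consecutive r-cycles (1..r)(r+1..2r)...(n-r+1..n).\<close>
definition cycprod :: "nat \<Rightarrow> nat \<Rightarrow> nat \<Rightarrow> nat" where
  "cycprod n r i = (if i \<in> {1..n} then (if i mod r = 0 then i + 1 - r else i + 1) else i)"

end

theory Submission
  imports Defs
begin


lemma invol_permutes:
  assumes "\<And>x. f (f x) = x" "\<And>x. x \<notin> S \<Longrightarrow> f x = x"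
  shows "f permutes S"
  unfolding permutes_def
proof (intro conjI allI impI)
  fix x assume "x \<notin> S" thus "f x = x" by (rule assms(2))
next
  fix y show "\<exists>!x. f x = y"
    by (rule ex1I[of _ "f y"]) (use assms(1) in metis)+
qed

fun gg :: "nat \<Rightarrow> nat \<Rightarrow> real" where
  "gg r 0 = 1"
| "gg r (Suc 0) = 0"
| "gg r (Suc (Suc k)) = real r * real (Suc k) * gg r k"

locale blocks =
  fixes m r :: nat
  assumes rpos: "0 < r" and reven: "even r"
begin

abbreviation "N \<equiv> m * r"
abbreviation "P \<equiv> cycprod (m*r) r"

definition blk :: "nat \<Rightarrow> nat" where "blk x = (x - 1) div r"
definition pos :: "nat \<Rightarrow> nat" where "pos x = (x - 1) mod r"
definition rot :: "nat \<Rightarrow> nat \<Rightarrow> nat" where "rot b k = b * r + 1 + k mod r"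
definition B :: "nat \<Rightarrow> nat set" where "B b = {x \<in> {1..N}. blk x = b}"
definition U :: "nat set \<Rightarrow> nat set" where "U A = {x \<in> {1..N}. blk x \<in> A}"

lemma pos_lt[simp]: "pos x < r" using rpos by (simp add: pos_def)

lemma x_repr: "1 \<le> x \<Longrightarrow> x = blk x * r + pos x + 1"
  unfolding blk_def pos_def by (metis Suc_diff_1 add.commute div_mult_mod_eq le_eq_less_or_eq plus_1_eq_Suc zero_less_iff_neq_zero le_add_diff_inverse2)

lemma blk_rot[simp]: "blk (rot b k) = b"
  unfolding blk_def rot_def using rpos by simp

lemma pos_rot[simp]: "pos (rot b k) = k mod r"
  unfolding pos_def rot_def using rpos by simp

lemma rot_blk_pos[simp]: "1 \<le> x \<Longrightarrow> rot (blk x) (pos x) = x"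
  unfolding rot_def using x_repr[of x] by simp

lemma rot_mod[simp]: "rot b (k mod r) = rot b k"
  unfolding rot_def by simp

lemma rot_eq_iff: "rot b k = rot b' k' \<longleftrightarrow> b = b' \<and> k mod r = k' mod r"
  by (metis blk_rot pos_rot rot_def)

lemma rot_ge1[simp]: "1 \<le> rot b k" by (simp add: rot_def)

lemma rot_in: assumes "b < m" shows "rot b k \<in> {1..N}"
proof -
  have "k mod r < r" using rpos by simp
  moreover have "b * r + r \<le> m * r" using assms by (metis Suc_leI mult_Suc mult_le_mono1 add.commute)
  ultimately show ?thesis by (simp add: rot_def)
qed

lemma blk_lt: assumes "x \<in> {1..N}" shows "blk x < m"
proof -
  have "x - 1 < m * r" using assms by auto
  thus ?thesis unfolding blk_def by (simp add: div_less_iff_less_mult rpos)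
qed

lemma rot_in_B: "b < m \<Longrightarrow> rot b k \<in> B b"
  using rot_in by (simp add: B_def)

lemma P_eq: "P x = (if x \<in> {1..N} then rot (blk x) (Suc (pos x)) else x)"
proof (cases "x \<in> {1..N}")
  case True
  define b where "b = blk x"
  define p where "p = pos x"
  have plt: "p < r" by (simp add: p_def)
  have x: "x = b * r + p + 1" using x_repr True by (auto simp: b_def p_def)
  have xm: "x mod r = Suc p mod r" unfolding x by simp
  show ?thesis
  proof (cases "Suc p = r")
    case True
    hence "x mod r = 0" using xm by simp
    moreover have "x + 1 - r = rot b (Suc p)" using True unfolding x by (simp add: rot_def)
    ultimately show ?thesis using \<open>x \<in> {1..N}\<close> by (simp add: cycprod_def b_def p_def)
  next
    case False
    hence lt: "Suc p < r" using plt by linarith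
    hence "x mod r \<noteq> 0" using xm by simp
    moreover have "x + 1 = rot b (Suc p)" using lt unfolding x by (simp add: rot_def)
    ultimately show ?thesis using \<open>x \<in> {1..N}\<close> by (simp add: cycprod_def b_def p_def)
  qed
next
  case False
  have "P x = x" unfolding cycprod_def by (simp only: if_not_P[OF False])
  thus ?thesis by (simp only: if_not_P[OF False])
qed

lemma P_rot: "b < m \<Longrightarrow> P (rot b k) = rot b (Suc k)"
proof -
  assume b: "b < m"
  have "P (rot b k) = rot b (Suc (k mod r))" using rot_in[OF b, of k] by (simp add: P_eq)
  also have "\<dots> = rot b (Suc k)" unfolding rot_def by (simp add: mod_Suc_eq)
  finally show ?thesis .
qed

lemma P_in: "x \<in> {1..N} \<Longrightarrow> P x \<in> {1..N} \<and> blk (P x) = blk x"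
  using rot_in blk_lt by (simp add: P_eq)

lemma P_U: "P x \<in> U A \<longleftrightarrow> x \<in> U A"
proof (cases "x \<in> {1..N}")
  case True thus ?thesis using P_in[OF True] by (simp add: U_def)
next
  case False hence "P x = x" by (simp only: P_eq if_not_P[OF False] if_False) thus ?thesis by simp
qed

lemma P_B: "P x \<in> B b \<longleftrightarrow> x \<in> B b"
proof (cases "x \<in> {1..N}")
  case True thus ?thesis using P_in[OF True] by (simp add: B_def)
next
  case False hence "P x = x" by (simp only: P_eq if_not_P[OF False] if_False) thus ?thesis by simp
qed

lemma B_U: "b \<in> A \<Longrightarrow> B b \<subseteq> U A" by (auto simp: B_def U_def)

lemma comm_rot:
  assumes comm: "\<And>x. w (P x) = P (w x)" and b: "b < m" and y: "w (rot b 0) \<in> {1..N}"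
  shows "w (rot b k) = rot (blk (w (rot b 0))) (pos (w (rot b 0)) + k)"
proof (induction k)
  case 0
  show ?case using y by simp
next
  case (Suc k)
  have "w (rot b (Suc k)) = w (P (rot b k))" using P_rot b by simp
  also have "\<dots> = P (w (rot b k))" by (rule comm)
  also have "\<dots> = rot (blk (w (rot b 0))) (Suc (pos (w (rot b 0)) + k))"
    using Suc P_rot blk_lt[OF y] by simp
  finally show ?case by simp
qed

end

context blocks
begin

definition W :: "nat set \<Rightarrow> (nat \<Rightarrow> nat) set" where
  "W A = {w. (\<forall>x. x \<notin> U A \<longrightarrow> w x = x) \<and> (\<forall>x. w (w x) = x) \<and> (\<forall>x. w (P x) = P (w x))}"

lemma W_D:
  assumes "w \<in> W A"
  shows "\<And>x. x \<notin> U A \<Longrightarrow> w x = x" "\<And>x. w (w x) = x" "\<And>x. w (P x) = P (w x)"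
  using assms by (auto simp: W_def)

lemma W_maps: assumes "w \<in> W A" "x \<in> U A" shows "w x \<in> U A"
  using W_D[OF assms(1)] assms(2) by metis

lemma U_sub: "U A \<subseteq> {1..N}" by (auto simp: U_def)

lemma finite_W: "finite (W A)"
proof -
  have "W A \<subseteq> {w. w permutes U A}"
  proof
    fix w assume w: "w \<in> W A"
    have "w permutes U A" by (rule invol_permutes) (use W_D[OF w] in auto)
    thus "w \<in> {w. w permutes U A}" by simp
  qed
  moreover have "finite (U A)" using U_sub by (meson finite_atLeastAtMost finite_subset)
  ultimately show ?thesis using finite_permutations[of "U A"] finite_subset by auto
qed

definition glue :: "nat \<Rightarrow> nat \<Rightarrow> nat \<Rightarrow> (nat \<Rightarrow> nat) \<Rightarrow> nat \<Rightarrow> nat" where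
  "glue a c s v x = (if x \<in> B a then rot c (s + pos x)
      else if x \<in> B c then rot a (pos x + (r - s)) else v x)"

lemma B_rot: "x \<in> B b \<Longrightarrow> rot b (pos x) = x"
  by (auto simp: B_def)

lemma rot_in_B': "rot b k \<in> B b' \<longleftrightarrow> b' = b \<and> b < m"
proof
  assume h: "rot b k \<in> B b'"
  hence "rot b k \<in> {1..N}" "b' = b" by (auto simp: B_def)
  thus "b' = b \<and> b < m" using blk_lt[of "rot b k"] by simp
next
  assume "b' = b \<and> b < m" thus "rot b k \<in> B b'" using rot_in_B by simp
qed

lemma B_lt: "x \<in> B b \<Longrightarrow> b < m" using blk_lt by (auto simp: B_def)

lemma rot_mod1[simp]: "rot b (k mod r + j) = rot b (k + j)"
  unfolding rot_def by (simp add: mod_add_left_eq)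

lemma rot_mod2[simp]: "rot b (j + k mod r) = rot b (j + k)"
  unfolding rot_def by (simp add: mod_add_right_eq)

lemma rot_Suc_mod[simp]: "rot b (Suc (k mod r)) = rot b (Suc k)"
  unfolding rot_def by (simp add: mod_Suc_eq)

lemma rot_plus_r[simp]: "rot b (k + r) = rot b k"
  unfolding rot_def by simp

lemma rot_zero_mod: "(j) mod r = 0 \<Longrightarrow> rot b (j + k) = rot b k"
  unfolding rot_def by (metis add_0 mod_add_left_eq)

lemma modarith1: assumes "s < r" "p < r" shows "((s + p) mod r + (r - s)) mod r = p"
proof (cases "s + p < r")
  case True thus ?thesis using assms by simp
next
  case False
  hence "(s + p) mod r = s + p - r" using assms by (simp add: le_mod_geq)
  thus ?thesis using assms False by simp
qed

lemma glue_W: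
  assumes A: "A \<subseteq> {..<m}" and a: "a \<in> A" and c: "c \<in> A" and s: "s < r"
    and cond: "a \<noteq> c \<or> (2 * s) mod r = 0" and v: "v \<in> W (A - {a, c})"
  shows "glue a c s v \<in> W A"
proof -
  let ?g = "glue a c s v"
  have am: "a < m" and cm: "c < m" using A a c by auto
  have vout: "\<And>x. x \<notin> U (A - {a,c}) \<Longrightarrow> v x = x" using W_D[OF v] by blast
  have vinv: "\<And>x. v (v x) = x" using W_D[OF v] by blast
  have vcomm: "\<And>x. v (P x) = P (v x)" using W_D[OF v] by blast
  have vnot: "v x \<notin> B a \<and> v x \<notin> B c" if "x \<notin> B a" "x \<notin> B c" for x
  proof (cases "x \<in> U (A - {a,c})")
    case True
    hence "v x \<in> U (A - {a,c})" using W_maps[OF v] by blast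
    thus ?thesis by (auto simp: U_def B_def)
  qed (use that vout in auto)
  have out: "?g x = x" if "x \<notin> U A" for x
  proof -
    have "x \<notin> B a" "x \<notin> B c" using that B_U a c by auto
    moreover have "x \<notin> U (A - {a,c})" using that by (auto simp: U_def)
    ultimately show ?thesis by (simp add: glue_def vout)
  qed
  have inv: "?g (?g x) = x" for x
  proof (cases "x \<in> B a")
    case True
    note x = B_rot[OF True]
    show ?thesis
    proof (cases "a = c")
      case True
      hence "(2*s) mod r = 0" using cond by simp
      have "?g (?g x) = rot a (s + (s + pos x) mod r)"
        using \<open>x \<in> B a\<close> True rot_in_B[OF am] by (simp add: glue_def)
      also have "\<dots> = rot a (2*s + pos x)" by (simp add: mult_2 add.assoc)
      also have "\<dots> = rot a (pos x)" by (rule rot_zero_mod) fact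
      finally show ?thesis using x by simp
    next
      case False
      have "?g x = rot c (s + pos x)" using \<open>x \<in> B a\<close> by (simp add: glue_def)
      moreover have "rot c (s + pos x) \<in> B c" "rot c (s + pos x) \<notin> B a"
        using rot_in_B[OF cm] False rot_in_B' by auto
      ultimately have "?g (?g x) = rot a ((s + pos x) mod r + (r - s))" by (simp add: glue_def)
      also have "\<dots> = rot a (((s + pos x) mod r + (r - s)) mod r)" by (simp only: rot_mod)
      also have "\<dots> = rot a (pos x)" using modarith1[OF s pos_lt] by simp
      finally show ?thesis using x by simp
    qed
  next
    case nA: False
    show ?thesis
    proof (cases "x \<in> B c")
      case True
      note x = B_rot[OF True]
      have "?g x = rot a (pos x + (r - s))" using nA True by (simp add: glue_def)
      moreover have "rot a (pos x + (r - s)) \<in> B a" using rot_in_B[OF am] by auto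
      ultimately have "?g (?g x) = rot c (s + (pos x + (r - s)) mod r)" by (simp add: glue_def)
      also have "\<dots> = rot c (s + (pos x + (r - s)))" by simp
      also have "s + (pos x + (r - s)) = pos x + r" using s by simp
      also have "rot c (pos x + r) = rot c (pos x)" by simp
      finally show ?thesis using x by simp
    next
      case nC: False
      have "?g x = v x" using nA nC by (simp add: glue_def)
      moreover have "v x \<notin> B a" "v x \<notin> B c" using vnot nA nC by auto
      ultimately show ?thesis by (simp add: glue_def vinv)
    qed
  qed
  have comm: "?g (P x) = P (?g x)" for x
  proof (cases "x \<in> B a")
    case True
    note x = B_rot[OF True]
    have "P x = rot a (Suc (pos x))" using P_rot[OF am, of "pos x"] x by simp
    moreover have "P x \<in> B a" using True P_B by blast
    ultimately have "?g (P x) = rot c (s + Suc (pos x) mod r)" by (simp add: glue_def)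
    also have "\<dots> = rot c (Suc (s + pos x))" by simp
    also have "\<dots> = P (rot c (s + pos x))" using P_rot[OF cm] by simp
    also have "\<dots> = P (?g x)" using True by (simp add: glue_def)
    finally show ?thesis .
  next
    case nA: False
    hence nA': "P x \<notin> B a" using P_B by blast
    show ?thesis
    proof (cases "x \<in> B c")
      case True
      note x = B_rot[OF True]
      have "P x = rot c (Suc (pos x))" using P_rot[OF cm, of "pos x"] x by simp
      moreover have "P x \<in> B c" using True P_B by blast
      ultimately have "?g (P x) = rot a (Suc (pos x) mod r + (r - s))" using nA' by (simp add: glue_def)
      also have "\<dots> = rot a (Suc (pos x + (r - s)))" by simp
      also have "\<dots> = P (rot a (pos x + (r - s)))" using P_rot[OF am] by simp
      also have "\<dots> = P (?g x)" using True nA by (simp add: glue_def)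
      finally show ?thesis .
    next
      case nC: False
      hence "P x \<notin> B c" using P_B by blast
      thus ?thesis using nA nC nA' by (simp add: glue_def vcomm)
    qed
  qed
  show ?thesis unfolding W_def using out inv comm by blast
qed

end

context blocks
begin

definition restr :: "nat set \<Rightarrow> nat \<Rightarrow> nat \<Rightarrow> (nat \<Rightarrow> nat) \<Rightarrow> nat \<Rightarrow> nat" where
  "restr A a c w x = (if x \<in> U (A - {a,c}) then w x else x)"

lemma restr_props:
  assumes A: "A \<subseteq> {..<m}" and a: "a \<in> A" and w: "w \<in> W A"
  defines "c \<equiv> blk (w (rot a 0))" and "s \<equiv> pos (w (rot a 0))"
  shows "c \<in> A" "s < r" "a \<noteq> c \<or> (2 * s) mod r = 0"
    "restr A a c w \<in> W (A - {a, c})" "glue a c s (restr A a c w) = w"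
proof -
  have am: "a < m" using A a by auto
  have inv: "\<And>x. w (w x) = x" and out: "\<And>x. x \<notin> U A \<Longrightarrow> w x = x"
    and comm: "\<And>x. w (P x) = P (w x)" using W_D[OF w] by blast+
  have r0: "rot a 0 \<in> U A" using rot_in[OF am] a by (simp add: U_def)
  hence y: "w (rot a 0) \<in> U A" using W_maps[OF w] by blast
  thus cA: "c \<in> A" by (simp add: U_def c_def)
  have y1: "w (rot a 0) \<in> {1..N}" using y U_sub by blast
  have cm: "c < m" using blk_lt[OF y1] c_def by simp
  show sr: "s < r" by (simp add: s_def)
  have wa: "w (rot a k) = rot c (s + k)" for k
    unfolding c_def s_def by (rule comm_rot[where w=w, OF comm am y1])
  have wB: "w x = rot c (s + pos x)" if "x \<in> B a" for x
  proof -
    have "w x = w (rot a (pos x))" using B_rot[OF that] by simp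
    thus ?thesis using wa by simp
  qed
  have y_eq: "w (rot a 0) = rot c s" using wa[of 0] by simp
  show cond: "a \<noteq> c \<or> (2 * s) mod r = 0"
  proof (cases "a = c")
    case True
    have "rot a 0 = w (w (rot a 0))" using inv by simp
    also have "\<dots> = w (rot a s)" using y_eq True by simp
    also have "\<dots> = rot a (2 * s)" using wa True by (simp add: mult_2)
    finally have "rot a 0 = rot a (2 * s)" .
    thus ?thesis using rot_eq_iff by simp
  qed simp
  have wC: "w x = rot a (pos x + (r - s))" if "x \<in> B c" "a \<noteq> c" for x
  proof -
    have ss: "s + (r - s) = r" using sr by simp
    have "w (rot a (r - s)) = rot c (s + (r - s))" by (rule wa)
    also have "\<dots> = rot c 0" unfolding ss by (simp add: rot_def)
    finally have h: "w (rot a (r - s)) = rot c 0" .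
    have "w (rot c 0) = w (w (rot a (r - s)))" using h by simp
    also have "\<dots> = rot a (r - s)" by (rule inv)
    finally have wc0: "w (rot c 0) = rot a (r - s)" .
    have "w (rot c k) = rot a (r - s + k)" for k
      using comm_rot[where w=w, OF comm cm, of k] wc0 rot_in[OF am] by simp
    hence "w (rot c k) = rot a (k + (r - s))" for k by (simp add: add.commute)
    moreover have "w x = w (rot c (pos x))" using B_rot[OF that(1)] by simp
    ultimately show ?thesis by simp
  qed
  let ?v = "restr A a c w"
  have wmapA: "w x \<notin> B a" if "x \<in> U (A - {a,c})" for x
  proof
    assume "w x \<in> B a"
    hence "w (w x) \<in> B c" using wB rot_in_B[OF cm] by simp
    thus False using that inv by (auto simp: U_def B_def)
  qed
  have wmapC: "w x \<notin> B c" if "x \<in> U (A - {a,c})" for x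
  proof
    assume wx: "w x \<in> B c"
    show False
    proof (cases "a = c")
      case True thus False using wmapA that wx by simp
    next
      case False
      hence "w (w x) \<in> B a" using wC wx rot_in_B[OF am] by simp
      thus False using that inv by (auto simp: U_def B_def)
    qed
  qed
  have wmap: "w x \<in> U (A - {a,c})" if "x \<in> U (A - {a,c})" for x
  proof -
    have "x \<in> U A" using that by (auto simp: U_def)
    hence "w x \<in> U A" using W_maps[OF w] by blast
    thus ?thesis using wmapA[OF that] wmapC[OF that] by (auto simp: U_def B_def)
  qed
  show "?v \<in> W (A - {a, c})"
    unfolding W_def
  proof (intro CollectI conjI allI impI)
    fix x assume "x \<notin> U (A - {a, c})" thus "?v x = x" by (simp add: restr_def)
  next
    fix x show "?v (?v x) = x" using wmap inv by (simp add: restr_def)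
  next
    fix x show "?v (P x) = P (?v x)" using comm P_U[of x "A - {a,c}"] by (simp add: restr_def)
  qed
  show "glue a c s ?v = w"
  proof
    fix x
    show "glue a c s ?v x = w x"
    proof (cases "x \<in> B a")
      case True thus ?thesis using wB by (simp add: glue_def)
    next
      case nA: False
      show ?thesis
      proof (cases "x \<in> B c")
        case True
        hence "a \<noteq> c" using nA by auto
        thus ?thesis using True nA wC by (simp add: glue_def)
      next
        case nC: False
        show ?thesis
        proof (cases "x \<in> U (A - {a,c})")
          case True thus ?thesis using nA nC by (simp add: glue_def restr_def)
        next
          case False
          hence "x \<notin> U A" using nA nC by (auto simp: U_def B_def)
          thus ?thesis using nA nC False out by (simp add: glue_def restr_def)
        qed
      qed
    qed
  qed
qed

lemma glue_inj:
  assumes "glue a c s v = glue a c s' v'" "s < r" "s' < r" "a < m"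
    and v: "v \<in> W (A - {a,c})" and v': "v' \<in> W (A - {a,c})"
  shows "s = s' \<and> v = v'"
proof
  have "glue a c s v (rot a 0) = rot c s" "glue a c s' v' (rot a 0) = rot c s'"
    using rot_in_B[OF assms(4)] by (simp_all add: glue_def)
  thus "s = s'" using assms(1-3) rot_eq_iff by auto
  show "v = v'"
  proof
    fix x
    show "v x = v' x"
    proof (cases "x \<in> U (A - {a,c})")
      case True
      hence "x \<notin> B a" "x \<notin> B c" by (auto simp: U_def B_def)
      thus ?thesis using fun_cong[OF assms(1), of x] by (simp add: glue_def)
    next
      case False thus ?thesis using W_D(1)[OF v] W_D(1)[OF v'] by simp
    qed
  qed
qed

lemma glue_image:
  assumes A: "A \<subseteq> {..<m}" and a: "a \<in> A" and c: "c \<in> A"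
  shows "{w \<in> W A. blk (w (rot a 0)) = c} =
    (\<lambda>(s, v). glue a c s v) ` ({s. s < r \<and> (a \<noteq> c \<or> (2 * s) mod r = 0)} \<times> W (A - {a,c}))"
    (is "?L = ?R")
proof
  show "?L \<subseteq> ?R"
  proof
    fix w assume "w \<in> ?L"
    hence w: "w \<in> W A" and cw: "blk (w (rot a 0)) = c" by auto
    note R = restr_props[OF A a w]
    show "w \<in> ?R"
      by (rule image_eqI[of _ _ "(pos (w (rot a 0)), restr A a c w)"]) (use R cw in auto)
  qed
next
  have am: "a < m" using A a by auto
  show "?R \<subseteq> ?L"
  proof
    fix w assume "w \<in> ?R"
    then obtain s v where sv: "s < r" "a \<noteq> c \<or> (2 * s) mod r = 0" "v \<in> W (A - {a,c})"
      and w: "w = glue a c s v" by auto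
    have "w \<in> W A" using glue_W[OF A a c sv] w by simp
    moreover have "blk (w (rot a 0)) = c" using w rot_in_B[OF am] by (simp add: glue_def)
    ultimately show "w \<in> ?L" by simp
  qed
qed

end

context blocks
begin

lemma core_lt:
  assumes i: "i \<in> {1..N}" and j: "j \<in> {1..N}" and ij: "i < j" and P: "P j < P i"
  shows "blk i = blk j \<and> pos j = r - 1"
proof -
  define bi where "bi = blk i"
  define bj where "bj = blk j"
  define pi where "pi = pos i"
  define pj where "pj = pos j"
  have pir: "pi < r" "pj < r" by (simp_all add: pi_def pj_def)
  have ie: "i = bi * r + pi + 1" using x_repr i by (auto simp: bi_def pi_def)
  have je: "j = bj * r + pj + 1" using x_repr j by (auto simp: bj_def pj_def)
  have Pi: "P i = bi * r + 1 + Suc pi mod r" using i by (simp add: P_eq rot_def bi_def pi_def)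
  have Pj: "P j = bj * r + 1 + Suc pj mod r" using j by (simp add: P_eq rot_def bj_def pj_def)
  have m1: "Suc pi mod r < r" "Suc pj mod r < r" using rpos by simp_all
  have "\<not> bi < bj"
  proof
    assume "bi < bj"
    hence "Suc bi * r \<le> bj * r" by (intro mult_le_mono1) simp
    hence "bi * r + r \<le> bj * r" by simp
    thus False using P Pi Pj m1 by linarith
  qed
  moreover have "\<not> bj < bi"
  proof
    assume "bj < bi"
    hence "Suc bj * r \<le> bi * r" by (intro mult_le_mono1) simp
    hence "bj * r + r \<le> bi * r" by simp
    thus False using ij ie je pir by linarith
  qed
  ultimately have beq: "bi = bj" by simp
  hence "pi < pj" using ij ie je by simp
  have "pj = r - 1"
  proof (rule ccontr)
    assume "pj \<noteq> r - 1"
    hence "Suc pj < r" using pir by linarith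
    hence "Suc pj mod r = Suc pj" "Suc pi mod r = Suc pi" using \<open>pi < pj\<close> by simp_all
    thus False using P Pi Pj beq \<open>pi < pj\<close> by simp
  qed
  thus ?thesis using beq by (simp add: bi_def bj_def pj_def)
qed

lemma core_inv:
  assumes i: "i \<in> {1..N}" and j: "j \<in> {1..N}"
    and c: "(int j - int i) * (int (P j) - int (P i)) < 0"
  shows "blk i = blk j \<and> i \<noteq> j \<and> (pos i = r - 1 \<or> pos j = r - 1)"
proof -
  have "i \<noteq> j" using c by auto
  show ?thesis
  proof (cases "i < j")
    case True
    hence "int j - int i > 0" by simp
    hence "int (P j) - int (P i) < 0" using c by (simp add: mult_less_0_iff)
    hence "P j < P i" by simp
    thus ?thesis using core_lt[OF i j True] \<open>i \<noteq> j\<close> by simp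
  next
    case False
    hence ji: "j < i" using \<open>i \<noteq> j\<close> by simp
    hence "int j - int i < 0" by simp
    hence "int (P j) - int (P i) > 0" using c by (simp add: mult_less_0_iff)
    hence "P i < P j" by simp
    thus ?thesis using core_lt[OF j i ji] \<open>i \<noteq> j\<close> by simp
  qed
qed

lemma inv_mem:
  assumes "{x, y} \<in> Inv N P"
  shows "blk x = blk y \<and> x \<noteq> y \<and> (pos x = r - 1 \<or> pos y = r - 1)"
proof -
  obtain i j where e: "{x, y} = {i, j}" and i: "i \<in> {1..N}" and j: "j \<in> {1..N}"
    and c: "(int j - int i) * (int (P j) - int (P i)) < 0"
    using assms unfolding Inv_def by blast
  have "(x = i \<and> y = j) \<or> (x = j \<and> y = i)" using e by (simp add: doubleton_eq_iff)
  thus ?thesis using core_inv[OF i j c] by auto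
qed

lemma finite_Inv: "finite (Inv N P)"
proof -
  have "Inv N P \<subseteq> Pow {1..N}" unfolding Inv_def by auto
  thus ?thesis using finite_subset by blast
qed

lemma half: obtains h where "r = 2 * h" "1 \<le> h" "h < r"
  using reven rpos by (metis evenE less_one mult_2 not_less nat_less_le one_add_one add_lessD1 le_add1 less_add_same_cancel1 mult_pos_pos nat_mult_1 zero_less_iff_neq_zero)

lemma p0_Inv:
  assumes am: "a < m" and h: "r = 2 * h" "1 \<le> h"
  shows "{rot a (h - 1), rot a (r - 1)} \<in> Inv N P"
proof -
  let ?i = "rot a (h - 1)" and ?j = "rot a (r - 1)"
  have hr: "h - 1 < r" "r - 1 < r" using h by auto
  have ie: "?i = a * r + 1 + (h - 1)" using hr by (simp add: rot_def)
  have je: "?j = a * r + 1 + (r - 1)" using hr by (simp add: rot_def)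
  have "P ?j = rot a (Suc (r - 1))" using P_rot[OF am] by simp
  also have "Suc (r - 1) = r" using rpos by simp
  finally have Pj: "P ?j = a * r + 1" by (simp add: rot_def)
  have "P ?i = rot a (Suc (h - 1))" using P_rot[OF am] by simp
  also have "Suc (h - 1) = h" using h by simp
  finally have Pi0: "P ?i = rot a h" .
  have "h < r" using h by simp
  hence "rot a h = a * r + 1 + h" by (simp add: rot_def)
  hence Pi: "P ?i = a * r + 1 + h" using Pi0 by simp
  have "int ?j - int ?i > 0" using ie je h by simp
  moreover have "int (P ?j) - int (P ?i) < 0" using Pi Pj h by simp
  ultimately have "(int ?j - int ?i) * (int (P ?j) - int (P ?i)) < 0" by (simp add: mult_pos_neg)
  thus ?thesis unfolding Inv_def using rot_in[OF am] by blast
qed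

end

context blocks
begin

definition F :: "(nat \<Rightarrow> nat) \<Rightarrow> real" where
  "F w = (-1::real) ^ card (Inv N P \<inter> Pairs N w)"

lemma Pairs_iff: "e \<in> Pairs N w \<longleftrightarrow> (\<exists>i. e = {i, w i} \<and> i \<in> {1..N} \<and> w i \<noteq> i)"
  unfolding Pairs_def by blast

lemma Pairs_I: "i \<in> {1..N} \<Longrightarrow> w i \<noteq> i \<Longrightarrow> {i, w i} \<in> Pairs N w"
  unfolding Pairs_def by blast

lemma v_moves: assumes "v \<in> W A'" "v i \<noteq> i" shows "i \<in> U A'"
  using W_D(1)[OF assms(1)] assms(2) by blast

lemma sign_ne:
  assumes ac: "a \<noteq> c" and v: "v \<in> W (A - {a, c})"
  shows "F (glue a c s v) = F v"
proof -
  let ?g = "glue a c s v"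
  have "Inv N P \<inter> Pairs N ?g = Inv N P \<inter> Pairs N v"
  proof (rule set_eqI, rule iffI)
    fix e assume "e \<in> Inv N P \<inter> Pairs N ?g"
    then obtain i where eI: "e \<in> Inv N P" and e: "e = {i, ?g i}" and i: "i \<in> {1..N}" "?g i \<noteq> i"
      by (auto simp: Pairs_iff)
    have "{i, ?g i} \<in> Inv N P" using eI e by simp
    hence bb: "blk i = blk (?g i)" by (rule inv_mem[THEN conjunct1])
    have nA: "i \<notin> B a"
    proof
      assume "i \<in> B a"
      hence "blk i = a" "blk (?g i) = c" by (simp_all add: B_def glue_def)
      thus False using bb ac by simp
    qed
    have nC: "i \<notin> B c"
    proof
      assume "i \<in> B c"
      hence "blk i = c" "blk (?g i) = a" using nA by (simp_all add: B_def glue_def)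
      thus False using bb ac by simp
    qed
    have "?g i = v i" using nA nC by (simp add: glue_def)
    thus "e \<in> Inv N P \<inter> Pairs N v" using eI e i Pairs_I[of i v] by auto
  next
    fix e assume "e \<in> Inv N P \<inter> Pairs N v"
    then obtain i where eI: "e \<in> Inv N P" and e: "e = {i, v i}" and i: "i \<in> {1..N}" "v i \<noteq> i"
      by (auto simp: Pairs_iff)
    have "i \<in> U (A - {a,c})" using v_moves[OF v i(2)] .
    hence "i \<notin> B a" "i \<notin> B c" by (auto simp: U_def B_def)
    hence "?g i = v i" by (simp add: glue_def)
    thus "e \<in> Inv N P \<inter> Pairs N ?g" using eI e i Pairs_I[of i ?g] by auto
  qed
  thus ?thesis by (simp add: F_def)
qed

lemma glue_0:
  assumes v: "v \<in> W (A - {a, a})"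
  shows "glue a a 0 v = v"
proof
  fix x show "glue a a 0 v x = v x"
  proof (cases "x \<in> B a")
    case True
    hence "x \<notin> U (A - {a, a})" by (auto simp: U_def B_def)
    hence "v x = x" using W_D(1)[OF v] by blast
    thus ?thesis using True B_rot[OF True] by (simp add: glue_def)
  qed (simp add: glue_def)
qed

lemma sign_h:
  assumes am: "a < m" and v: "v \<in> W (A - {a, a})" and h: "r = 2 * h" "1 \<le> h"
  shows "F (glue a a h v) = - F v"
proof -
  let ?g = "glue a a h v"
  let ?p = "{rot a (h - 1), rot a (r - 1)}"
  have hr: "h < r" using h by simp
  have gB: "?g x = rot a (h + pos x)" if "x \<in> B a" for x using that by (simp add: glue_def)
  have gnB: "?g x = v x" if "x \<notin> B a" for x using that by (simp add: glue_def)
  have pB: "rot a k \<in> B a" for k using rot_in_B[OF am] .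
  have vB: "i \<notin> B a" if "v i \<noteq> i" for i
  proof -
    have "i \<in> U (A - {a,a})" using v_moves[OF v that] .
    thus ?thesis by (auto simp: U_def B_def)
  qed
  have pI: "?p \<in> Inv N P" using p0_Inv[OF am h] .
  have pP: "?p \<in> Pairs N ?g"
    unfolding Pairs_iff
  proof (intro exI conjI)
    have "?g (rot a (h - 1)) = rot a (h + (h - 1) mod r)" using gB pB by simp
    also have "\<dots> = rot a (h + (h - 1))" by simp
    also have "h + (h - 1) = r - 1" using h by simp
    finally have g1: "?g (rot a (h - 1)) = rot a (r - 1)" .
    thus "?p = {rot a (h - 1), ?g (rot a (h - 1))}" by simp
    show "rot a (h - 1) \<in> {1..N}" using rot_in[OF am] .
    have m1: "(r - 1) mod r = r - 1" "(h - 1) mod r = h - 1" using hr rpos by simp_all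
    have "r - 1 \<noteq> h - 1" using hr h(2) by linarith
    hence "rot a (r - 1) \<noteq> rot a (h - 1)" unfolding rot_eq_iff m1 by simp
    thus "?g (rot a (h - 1)) \<noteq> rot a (h - 1)" using g1 by simp
  qed
  have pnP: "?p \<notin> Pairs N v"
  proof
    assume "?p \<in> Pairs N v"
    then obtain i where e: "?p = {i, v i}" and i: "v i \<noteq> i" by (auto simp: Pairs_iff)
    have "i \<in> ?p" using e by blast
    hence "i \<in> B a" using pB by blast
    thus False using vB[OF i] by simp
  qed
  have eq: "Inv N P \<inter> Pairs N ?g = insert ?p (Inv N P \<inter> Pairs N v)"
  proof (rule set_eqI, rule iffI)
    fix e assume "e \<in> Inv N P \<inter> Pairs N ?g"
    then obtain i where eI: "e \<in> Inv N P" and e: "e = {i, ?g i}" and i: "i \<in> {1..N}" "?g i \<noteq> i"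
      by (auto simp: Pairs_iff)
    show "e \<in> insert ?p (Inv N P \<inter> Pairs N v)"
    proof (cases "i \<in> B a")
      case True
      have ir: "rot a (pos i) = i" using B_rot[OF True] .
      have gi: "?g i = rot a (h + pos i)" using gB[OF True] .
      have pg: "pos (?g i) = (h + pos i) mod r" using gi by simp
      have "{i, ?g i} \<in> Inv N P" using eI e by simp
      hence im: "pos i = r - 1 \<or> pos (?g i) = r - 1" by (rule inv_mem[THEN conjunct2, THEN conjunct2])
      have "e = ?p"
      proof (cases "pos i = r - 1")
        case True
        have "?g i = rot a (h + (r - 1))" using gi True by simp
        also have "h + (r - 1) = (h - 1) + r" using h by simp
        also have "rot a ((h - 1) + r) = rot a (h - 1)" by simp
        finally have g2: "?g i = rot a (h - 1)" .
        have "i = rot a (r - 1)" using ir True by simp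
        hence "e = {rot a (r - 1), rot a (h - 1)}" using e g2 by simp
        thus ?thesis by (simp add: insert_commute)
      next
        case False
        hence pm: "(h + pos i) mod r = r - 1" using im pg by simp
        have "h + pos i < r"
        proof (rule ccontr)
          assume "\<not> h + pos i < r"
          hence ge: "r \<le> h + pos i" by simp
          have "(h + pos i) mod r = (h + pos i - r) mod r" using le_mod_geq[OF ge] .
          moreover have "h + pos i - r < r" using pos_lt[of i] hr by linarith
          ultimately have "(h + pos i) mod r = h + pos i - r" by simp
          thus False using pm pos_lt[of i] h by linarith
        qed
        hence "h + pos i = r - 1" using pm by simp
        hence pi: "pos i = h - 1" using h by simp
        have "?g i = rot a (r - 1)" using gi \<open>h + pos i = r - 1\<close> by simp
        moreover have "i = rot a (h - 1)" using ir pi by simp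
        ultimately show ?thesis using e by simp
      qed
      thus ?thesis by simp
    next
      case False
      hence gv: "?g i = v i" using gnB by simp
      hence "v i \<noteq> i" using i by simp
      hence "{i, v i} \<in> Pairs N v" using Pairs_I i(1) by blast
      moreover have "e = {i, v i}" using e gv by simp
      ultimately show ?thesis using eI by simp
    qed
  next
    fix e assume "e \<in> insert ?p (Inv N P \<inter> Pairs N v)"
    thus "e \<in> Inv N P \<inter> Pairs N ?g"
    proof
      assume "e = ?p" thus ?thesis using pI pP by simp
    next
      assume "e \<in> Inv N P \<inter> Pairs N v"
      then obtain i where eI: "e \<in> Inv N P" and e: "e = {i, v i}" and i: "i \<in> {1..N}" "v i \<noteq> i"
        by (auto simp: Pairs_iff)
      have gv: "?g i = v i" using gnB vB[OF i(2)] by simp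
      hence "?g i \<noteq> i" using i by simp
      hence "{i, ?g i} \<in> Pairs N ?g" using Pairs_I i(1) by blast
      moreover have "e = {i, ?g i}" using e gv by simp
      ultimately show ?thesis using eI by simp
    qed
  qed
  have fin: "finite (Inv N P \<inter> Pairs N v)" using finite_Inv by simp
  have "card (Inv N P \<inter> Pairs N ?g) = Suc (card (Inv N P \<inter> Pairs N v))"
    unfolding eq using fin pnP by simp
  thus ?thesis by (simp add: F_def)
qed

end

context blocks
begin

definition S :: "nat set \<Rightarrow> real" where "S A = sum F (W A)"

lemma glue_sum:
  assumes A: "A \<subseteq> {..<m}" and a: "a \<in> A" and c: "c \<in> A"
  shows "sum F {w \<in> W A. blk (w (rot a 0)) = c} =
    (\<Sum>s \<in> {s. s < r \<and> (a \<noteq> c \<or> (2 * s) mod r = 0)}. \<Sum>v \<in> W (A - {a,c}). F (glue a c s v))"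
proof -
  let ?D = "{s. s < r \<and> (a \<noteq> c \<or> (2 * s) mod r = 0)}"
  let ?f = "\<lambda>(s, v). glue a c s v"
  have am: "a < m" using A a by auto
  have inj: "inj_on ?f (?D \<times> W (A - {a,c}))"
  proof (rule inj_onI)
    fix x y assume x: "x \<in> ?D \<times> W (A - {a,c})" and y: "y \<in> ?D \<times> W (A - {a,c})" and e: "?f x = ?f y"
    obtain s v where xs: "x = (s, v)" by (cases x)
    obtain s' v' where ys: "y = (s', v')" by (cases y)
    have "s = s' \<and> v = v'"
      by (rule glue_inj[of a c s v s' v' A]) (use x y e xs ys am in auto)
    thus "x = y" using xs ys by simp
  qed
  have "sum F {w \<in> W A. blk (w (rot a 0)) = c} = sum F (?f ` (?D \<times> W (A - {a,c})))"
    using glue_image[OF A a c] by simp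
  also have "\<dots> = sum (F \<circ> ?f) (?D \<times> W (A - {a,c}))" by (rule sum.reindex[OF inj])
  also have "\<dots> = (\<Sum>(s,v) \<in> ?D \<times> W (A - {a,c}). F (glue a c s v))"
    by (rule sum.cong) auto
  also have "\<dots> = (\<Sum>s \<in> ?D. \<Sum>v \<in> W (A - {a,c}). F (glue a c s v))"
    by (rule sum.cartesian_product[symmetric])
  finally show ?thesis .
qed

lemma sum_ne:
  assumes A: "A \<subseteq> {..<m}" and a: "a \<in> A" and c: "c \<in> A" and ac: "a \<noteq> c"
  shows "sum F {w \<in> W A. blk (w (rot a 0)) = c} = real r * S (A - {a,c})"
proof -
  have D: "{s. s < r \<and> (a \<noteq> c \<or> (2 * s) mod r = 0)} = {..<r}" using ac by auto
  have "sum F {w \<in> W A. blk (w (rot a 0)) = c} = (\<Sum>s \<in> {..<r}. \<Sum>v \<in> W (A - {a,c}). F (glue a c s v))"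
    using glue_sum[OF A a c] D by simp
  also have "\<dots> = (\<Sum>s \<in> {..<r}. \<Sum>v \<in> W (A - {a,c}). F v)"
    using sign_ne[OF ac] by simp
  also have "\<dots> = real r * S (A - {a,c})" by (simp add: S_def)
  finally show ?thesis .
qed

lemma sum_eq:
  assumes A: "A \<subseteq> {..<m}" and a: "a \<in> A"
  shows "sum F {w \<in> W A. blk (w (rot a 0)) = a} = 0"
proof -
  obtain h where h: "r = 2 * h" "1 \<le> h" "h < r" by (rule half)
  have am: "a < m" using A a by auto
  have D: "{s. s < r \<and> (a \<noteq> a \<or> (2 * s) mod r = 0)} = {0, h}"
  proof (rule set_eqI, rule iffI)
    fix s assume "s \<in> {s. s < r \<and> (a \<noteq> a \<or> (2 * s) mod r = 0)}"
    hence s: "s < r" "(2 * s) mod r = 0" by auto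
    show "s \<in> {0, h}"
    proof (cases "s < h")
      case True
      hence "2 * s < r" using h by simp
      hence "2 * s = 0" using s by simp
      thus ?thesis by simp
    next
      case False
      hence ge: "r \<le> 2 * s" using h by simp
      have "(2 * s) mod r = (2 * s - r) mod r" using le_mod_geq[OF ge] .
      moreover have "2 * s - r < r" using s h by linarith
      ultimately have "2 * s - r = 0" using s by simp
      hence "s = h" using ge h by simp
      thus ?thesis by simp
    qed
  next
    fix s assume "s \<in> {0, h}"
    thus "s \<in> {s. s < r \<and> (a \<noteq> a \<or> (2 * s) mod r = 0)}" using h rpos by auto
  qed
  have h0: "h \<noteq> 0" using h by simp
  have "sum F {w \<in> W A. blk (w (rot a 0)) = a} = (\<Sum>s \<in> {0, h}. \<Sum>v \<in> W (A - {a,a}). F (glue a a s v))"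
    using glue_sum[OF A a a] D by simp
  also have "\<dots> = (\<Sum>v \<in> W (A - {a,a}). F (glue a a 0 v)) + (\<Sum>v \<in> W (A - {a,a}). F (glue a a h v))"
    using h0 by simp
  also have "(\<Sum>v \<in> W (A - {a,a}). F (glue a a 0 v)) = (\<Sum>v \<in> W (A - {a,a}). F v)"
    by (rule sum.cong) (simp_all add: glue_0)
  also have "(\<Sum>v \<in> W (A - {a,a}). F (glue a a h v)) = (\<Sum>v \<in> W (A - {a,a}). - F v)"
    by (rule sum.cong) (simp_all add: sign_h[OF am _ h(1,2)])
  finally show ?thesis by (simp add: sum_negf)
qed

lemma W_empty: "W {} = {id}"
proof
  show "W {} \<subseteq> {id}"
  proof
    fix w assume "w \<in> W {}"
    hence "w x = x" for x using W_D(1) by (simp add: U_def)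
    thus "w \<in> {id}" by (simp add: fun_eq_iff)
  qed
  show "{id} \<subseteq> W {}" by (simp add: W_def)
qed

lemma S_main: "A \<subseteq> {..<m} \<Longrightarrow> S A = gg r (card A)"
proof (induction "card A" arbitrary: A rule: less_induct)
  case less
  show ?case
  proof (cases "A = {}")
    case True
    have "Pairs N id = {}" by (simp add: Pairs_def)
    thus ?thesis using True by (simp add: S_def W_empty F_def)
  next
    case False
    then obtain a where a: "a \<in> A" by blast
    have finA: "finite A" using less.prems finite_subset by blast
    have "S A = (\<Sum>c \<in> A. sum F {w \<in> W A. blk (w (rot a 0)) = c})"
      unfolding S_def
      by (rule sum.group[symmetric]) (use finite_W finA restr_props(1)[OF less.prems a] in auto)
    also have "\<dots> = sum F {w \<in> W A. blk (w (rot a 0)) = a}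
        + (\<Sum>c \<in> A - {a}. sum F {w \<in> W A. blk (w (rot a 0)) = c})"
      using sum.remove[OF finA a] by simp
    also have "sum F {w \<in> W A. blk (w (rot a 0)) = a} = 0" using sum_eq[OF less.prems a] .
    also have "(\<Sum>c \<in> A - {a}. sum F {w \<in> W A. blk (w (rot a 0)) = c})
        = (\<Sum>c \<in> A - {a}. real r * gg r (card A - 2))"
    proof (rule sum.cong)
      fix c assume c: "c \<in> A - {a}"
      have cd: "card (A - {a,c}) = card A - 2" using c a finA by (simp add: card_Diff_subset)
      have "card (A - {a,c}) < card A" using c a finA by (intro psubset_card_mono) auto
      hence "S (A - {a,c}) = gg r (card (A - {a,c}))" using less.hyps less.prems by auto
      thus "sum F {w \<in> W A. blk (w (rot a 0)) = c} = real r * gg r (card A - 2)"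
        using sum_ne[OF less.prems a _ ] c cd by auto
    qed simp
    also have "\<dots> = real (card A - 1) * real r * gg r (card A - 2)"
      using finA a by simp
    finally have SA: "S A = real (card A - 1) * real r * gg r (card A - 2)" by simp
    have "card A \<noteq> 0" using finA False by simp
    then obtain k where k: "card A = Suc k" by (cases "card A") auto
    show ?thesis
    proof (cases k)
      case 0 thus ?thesis using SA k by simp
    next
      case (Suc j) thus ?thesis using SA k by simp
    qed
  qed
qed

lemma U_all: "U {..<m} = {1..N}" using blk_lt by (auto simp: U_def)

lemma W_all: "W {..<m} = involutions N \<inter> centralizer N P"
proof
  show "W {..<m} \<subseteq> involutions N \<inter> centralizer N P"
  proof
    fix w assume w: "w \<in> W {..<m}"
    have p: "w permutes {1..N}" by (rule invol_permutes) (use W_D[OF w] U_all in auto)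
    have "w \<circ> w = id" using W_D(2)[OF w] by (simp add: fun_eq_iff)
    moreover have "w \<circ> P = P \<circ> w" using W_D(3)[OF w] by (simp add: fun_eq_iff)
    ultimately show "w \<in> involutions N \<inter> centralizer N P" using p
      by (simp add: involutions_def centralizer_def)
  qed
  show "involutions N \<inter> centralizer N P \<subseteq> W {..<m}"
  proof
    fix w assume w: "w \<in> involutions N \<inter> centralizer N P"
    hence p: "w permutes {1..N}" and ww: "w \<circ> w = id" and wp: "w \<circ> P = P \<circ> w"
      by (auto simp: involutions_def centralizer_def)
    have "\<forall>x. x \<notin> U {..<m} \<longrightarrow> w x = x" using permutes_not_in[OF p] U_all by auto
    moreover have "\<forall>x. w (w x) = x" using ww by (simp add: fun_eq_iff)
    moreover have "\<forall>x. w (P x) = P (w x)" using wp by (simp add: fun_eq_iff)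
    ultimately show "w \<in> W {..<m}" by (simp add: W_def)
  qed
qed

lemma total: "(\<Sum>w \<in> involutions N \<inter> centralizer N P. (-1::real) ^ inv_w N w P) = gg r m"
proof -
  have "(\<Sum>w \<in> involutions N \<inter> centralizer N P. (-1::real) ^ inv_w N w P) = S {..<m}"
    unfolding S_def W_all by (rule sum.cong) (simp_all add: F_def inv_w_def)
  also have "\<dots> = gg r m" using S_main[of "{..<m}"] by simp
  finally show ?thesis .
qed

end

lemma gg_closed:
  "gg r k = (if odd k then 0 else fact k / (fact (k div 2) * 2 ^ (k div 2)) * real r ^ (k div 2))"
proof (induction r k rule: gg.induct)
  case (3 r k)
  show ?case
  proof (cases "odd k")
    case True thus ?thesis using 3 by simp
  next
    case False
    then obtain j where j: "k = 2 * j" by (auto elim: evenE)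
    have k2: "Suc (Suc k) div 2 = Suc j" using j by simp
    have "gg r (Suc (Suc k)) = real r * real (Suc k) * (fact k / (fact j * 2 ^ j) * real r ^ j)"
      using 3 False j by simp
    also have "\<dots> = fact (Suc (Suc k)) / (fact (Suc j) * 2 ^ Suc j) * real r ^ Suc j"
    proof -
      have e1: "(fact (Suc (Suc k)) :: real) = (2 * (real j + 1)) * ((real k + 1) * fact k)"
        unfolding j by (simp add: fact_Suc algebra_simps)
      have e2: "(fact (Suc j) :: real) * 2 ^ Suc j = (2 * (real j + 1)) * (fact j * 2 ^ j)"
        by (simp add: fact_Suc algebra_simps)
      have nz: "(2 * (real j + 1)) \<noteq> 0" by simp
      have "(fact (Suc (Suc k)) :: real) / (fact (Suc j) * 2 ^ Suc j) = ((real k + 1) * fact k) / (fact j * 2 ^ j)"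
        unfolding e1 e2 using nz by (rule mult_divide_mult_cancel_left)
      thus ?thesis by (simp add: algebra_simps)
    qed
    finally show ?thesis using False k2 by simp
  qed
qed simp_all


theorem lemma3p4:
  fixes n r :: nat
  assumes "0 < r" and "even r" and "r dvd n"
  shows "(\<Sum>w \<in> involutions n \<inter> centralizer n (cycprod n r).
            (-1::real) ^ inv_w n w (cycprod n r)) =
         (if odd (n div r) then 0
          else fact (n div r) / (fact (n div (2*r)) * 2 ^ (n div (2*r)))
               * real r ^ (n div (2*r)))"
proof -
  define m where "m = n div r"
  have n: "n = m * r" using assms(3) m_def by simp
  interpret blocks m r using assms(1,2) by unfold_locales
  have d1: "n div r = m" using n assms(1) by simp
  have d2: "n div (2*r) = m div 2" using d1 by (simp add: div_mult2_eq mult.commute)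
  have "(\<Sum>w \<in> involutions n \<inter> centralizer n (cycprod n r).
            (-1::real) ^ inv_w n w (cycprod n r)) = gg r m"
    using total n by simp
  also have "\<dots> = (if odd m then 0 else fact m / (fact (m div 2) * 2 ^ (m div 2)) * real r ^ (m div 2))"
    by (rule gg_closed)
  finally show ?thesis using d1 d2 by simp
qed

end
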